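(* Let $\mathbf{k}$ be a commutative ring, $\lambda\in\mathbf{k}$ and $X$ a set, and let $(\mathbf{k}\mathcal{F}_X^a,\diamond,B^+)$ and $\Delta_a:\mathbf{k}\mathcal{F}_X^a\to\mathbf{k}\mathcal{F}_X^a\otimes\mathbf{k}\mathcal{F}_X^a$ be as described in the context. Then: (1) $\Delta_a(\bullet)=\bullet\otimes\bullet$; (2) $\Delta_a(\bullet x\bullet)=\bullet x\bullet\otimes\bullet+\bullet\otimes\bullet x\bullet$ for every $x\in X$; (3) $\Delta_a(B^+(F))=B^+(F)\otimes\bullet+(\mathrm{id}\otimes B^+)(\Delta_a(F))$ for all $F\in\mathcal{F}_X^a$; (4) $\Delta_a(F_1\diamond F_2)=\Delta_a(F_1)\diamond\Delta_a(F_2)$ for all $F_1,F_2\in\mathcal{F}_X^a$, where $\mathbf{k}\mathcal{F}_X^a\otimes\mathbf{k}\mathcal{F}_X^a$ carries the componentwise product $(a\otimes b)\diamond(c\otimes d)=(a\diamond c)\otimes(b\diamond d)$.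
   Context: Angularly decorated forests. The set $\mathcal{F}_X^a$ of angularly decorated (planar rooted) forests and its subset of angularly decorated trees are defined recursively: the one-vertex tree $\bullet$ is a tree; if $T_1,\dots,T_k$ ($k\ge1$) are trees and $x_1,\dots,x_{k-1}\in X$, then the word $T_1x_1T_2x_2\cdots x_{k-1}T_k$ is a forest (for $k=1$ it is the tree $T_1$); and if $F=T_1x_1\cdots x_{k-1}T_k$ is a forest, then $B^+(F)$ is a tree, namely the planar tree obtained by adding a new root joined by edges to the roots of $T_1,\dots,T_k$ (in this order), the decoration $x_i$ sitting in the angle between the $i$-th and $(i+1)$-th children. Thus every angle between adjacent children of a vertex, and every gap between adjacent trees of a forest, carries an element of $X$. The depth of a tree is the maximal length of a path from the root to a leaf ($\mathrm{dep}(\bullet)=0$, $\mathrm{dep}(B^+(F))=\mathrm{dep}(F)+1$); the depth of a forest is the maximum depth of its trees. $\mathbf{k}\mathcal{F}_X^a$ is the free $\mathbf{k}$-module on $\mathcal{F}_X^a$, and $B^+$ is extended linearly. Product. The bilinear product $\diamond$ on $\mathbf{k}\mathcal{F}_X^a$ is defined by recursion on the sum of depths: for trees, $\bullet\diamond\bullet=\bullet$, $T\diamond\bullet=T$, $\bullet\diamond T=T$, and $B^+(\overline{T})\diamond B^+(\overline{T'})=B^+\big(B^+(\overline{T})\diamond\overline{T'}\big)+B^+\big(\overline{T}\diamond B^+(\overline{T'})\big)+\lambda B^+\big(\overline{T}\diamond\overline{T'}\big)$; for forests $T=T_1x_1\cdots x_{m-1}T_m$ and $T'=T'_1y_1\cdots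 y_{n-1}T'_n$ (trees $T_i,T'_j$, letters $x_i,y_j\in X$), $T\diamond T'=T_1x_1\cdots x_{m-1}(T_m\diamond T'_1)y_1T'_2\cdots y_{n-1}T'_n$, extended linearly in the middle factor. With this product, $\mathbf{k}\mathcal{F}_X^a$ is an associative algebra with unit $\bullet$ and $B^+$ is a Rota–Baxter operator of weight $\lambda$. Note that $A\,x\,B=A\diamond(\bullet x\bullet)\diamond B$ for forests $A,B$ and $x\in X$. Coproduct. Let $F\in\mathcal{F}_X^a$. A vertex is a non-leaf vertex if it has at least one child (the vertex of a tree $\bullet$ is a leaf). For a non-leaf vertex $v$, the rooted subtree $F_v$ is the angularly decorated tree consisting of $v$, all its descendants, the edges between them, and all decorations in angles between children of vertices of $F_v$. A decoration occurrence is an occurrence of a letter of $X$ in $F$ (an angle between two adjacent children of a vertex, or a gap between two adjacent trees of the forest). An admissible subforest $H$ of $F$ is a finite (possibly empty) set of pieces, each either a rooted subtree $F_v$ ($v$ non-leaf) or a single decoration occurrence, pairwise disjoint: no two chosen rooted subtrees share a vertex, and no chosen decoration occurrence lies inside a chosen rooted subtree. List the pieces in their left-to-right planar order $H_1,\dots,H_n$. The closure is $\mathrm{cl}(H)=\widehat{H_1}\diamond\cdots\diamond\widehat{H_n}$, where $\widehat{H_i}=H_i$ if $H_i$ is a rooted subtree and $\widehat{H_i}=\bullet x\bullet$ if $H_i$ is an occurrence of $x\in X$; $\mathrm{cl}(\emptyset)=\bullet$. The quotient $F/H\in\mathbf{k}\mathcal{F}_X^a$ is obtained by replacing in $F$ each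 chosen rooted subtree by a single leaf vertex $\bullet$ and each chosen decoration occurrence by a formal symbol $\star$, and then evaluating recursively: a word $T_1s_1T_2\cdots s_{k-1}T_k$ with $s_i\in X\cup\{\star\}$ evaluates to $\overline{T_1}\diamond c(s_1)\diamond\overline{T_2}\diamond\cdots\diamond c(s_{k-1})\diamond\overline{T_k}$, where $c(x)=\bullet x\bullet$ for $x\in X$, $c(\star)=\bullet$, $\overline{\bullet}=\bullet$, and $\overline{B^+(W)}=B^+(\text{value of }W)$. The angular coproduct is $\Delta_a(F)=\sum_{H}\mathrm{cl}(H)\otimes F/H$, the sum over all admissible subforests $H$ of $F$, extended linearly to $\mathbf{k}\mathcal{F}_X^a$. *)

theory Defs
  imports "HOL-Library.Poly_Mapping"
begin

text \<open>A tree is either the one-vertex tree (Leaf) or B+ of a forest; a forest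
  T1 x1 T2 ... x_{k-1} Tk is represented as the pair (T1, [(x1,T2),...,(x_{k-1},Tk)]).
  The decoration set X is the type 'x.\<close>

datatype 'x atree = Leaf | Bp "'x atree" "('x \<times> 'x atree) list"

type_synonym 'x aforest = "'x atree \<times> ('x \<times> 'x atree) list"

definition bplusF :: "'x aforest \<Rightarrow> 'x atree" where
  "bplusF F = Bp (fst F) (snd F)"

definition bulletF :: "'x aforest" where
  "bulletF = (Leaf, [])"

definition decF :: "'x \<Rightarrow> 'x aforest" where
  "decF x = (Leaf, [(x, Leaf)])"

definition treeF :: "'x atree \<Rightarrow> 'x aforest" where
  "treeF t = (t, [])"

definition lastT :: "'x aforest \<Rightarrow> 'x atree" where
  "lastT F = (if snd F = [] then fst F else snd (last (snd F)))"

definition replaceLast :: "'x aforest \<Rightarrow> 'x atree \<Rightarrow> 'x aforest" where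
  "replaceLast F t = (if snd F = [] then (t, [])
     else (fst F, butlast (snd F) @ [(fst (last (snd F)), t)]))"

text \<open>glue F t G: replace the last tree of F by t and append the remaining trees of G
  (i.e. F with its last tree and G with its first tree merged into t).\<close>
definition glue :: "'x aforest \<Rightarrow> 'x atree \<Rightarrow> 'x aforest \<Rightarrow> 'x aforest" where
  "glue F t G = (fst (replaceLast F t), snd (replaceLast F t) @ snd G)"

definition smul :: "'k::comm_ring_1 \<Rightarrow> ('a \<Rightarrow>\<^sub>0 'k) \<Rightarrow> ('a \<Rightarrow>\<^sub>0 'k)" where
  "smul c p = Poly_Mapping.map (\<lambda>v. c * v) p"

definition basis :: "'a \<Rightarrow> ('a \<Rightarrow>\<^sub>0 'k::comm_ring_1)" where
  "basis a = Poly_Mapping.single a 1"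

definition linL :: "('k::comm_ring_1 \<times> 'a) list \<Rightarrow> ('a \<Rightarrow>\<^sub>0 'k)" where
  "linL l = sum_list (map (\<lambda>(c, a). Poly_Mapping.single a c) l)"

definition lin_ext :: "('a \<Rightarrow> ('b \<Rightarrow>\<^sub>0 'k::comm_ring_1)) \<Rightarrow> ('a \<Rightarrow>\<^sub>0 'k) \<Rightarrow> ('b \<Rightarrow>\<^sub>0 'k)" where
  "lin_ext f p = (\<Sum>a\<in>Poly_Mapping.keys p. smul (Poly_Mapping.lookup p a) (f a))"

definition bilin_ext :: "('a \<Rightarrow> 'b \<Rightarrow> ('c \<Rightarrow>\<^sub>0 'k::comm_ring_1)) \<Rightarrow> ('a \<Rightarrow>\<^sub>0 'k)
    \<Rightarrow> ('b \<Rightarrow>\<^sub>0 'k) \<Rightarrow> ('c \<Rightarrow>\<^sub>0 'k)" where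
  "bilin_ext f p q = (\<Sum>a\<in>Poly_Mapping.keys p. \<Sum>b\<in>Poly_Mapping.keys q. smul (Poly_Mapping.lookup p a * Poly_Mapping.lookup q b) (f a b))"

text \<open>Tensor product of free modules: k[A] \<otimes> k[B] is identified with k[A \<times> B].\<close>
definition tens :: "('a \<Rightarrow>\<^sub>0 'k::comm_ring_1) \<Rightarrow> ('b \<Rightarrow>\<^sub>0 'k) \<Rightarrow> ('a \<times> 'b \<Rightarrow>\<^sub>0 'k)" where
  "tens p q = bilin_ext (\<lambda>a b. basis (a, b)) p q"

definition map_tens :: "(('a \<Rightarrow>\<^sub>0 'k::comm_ring_1) \<Rightarrow> ('a \<Rightarrow>\<^sub>0 'k))
    \<Rightarrow> (('b \<Rightarrow>\<^sub>0 'k) \<Rightarrow> ('b \<Rightarrow>\<^sub>0 'k)) \<Rightarrow> ('a \<times> 'b \<Rightarrow>\<^sub>0 'k) \<Rightarrow> ('a \<times> 'b \<Rightarrow>\<^sub>0 'k)" where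
  "map_tens f g P = lin_ext (\<lambda>(a, b). tens (f (basis a)) (g (basis b))) P"

lemma size_lastT_less:
  "size (lastT (a, as)) < Suc (size a + size_list (size_prod (\<lambda>_. 0) size) as)"
proof (cases "as = []")
  case True then show ?thesis by (simp add: lastT_def)
next
  case False
  obtain y t where yt: "last as = (y, t)" by fastforce
  then have "(y, t) \<in> set as" using False by (metis last_in_set)
  then have "size_prod (\<lambda>_. 0) size (y, t) \<le> size_list (size_prod (\<lambda>_. 0) size) as"
    by (rule size_list_estimation') simp
  then have "size t \<le> size_list (size_prod (\<lambda>_. 0) size) as" by simp
  then show ?thesis using False yt by (simp add: lastT_def)
qed

function tprod :: "'k::comm_ring_1 \<Rightarrow> 'x atree \<Rightarrow> 'x atree \<Rightarrow> ('k \<times> 'x atree) list" where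
  "tprod lam Leaf t = [(1, t)]"
| "tprod lam (Bp a as) Leaf = [(1, Bp a as)]"
| "tprod lam (Bp a as) (Bp b bs) =
     map (\<lambda>(c, t). (c, Bp t bs)) (tprod lam (Bp a as) b)
   @ map (\<lambda>(c, t). (c, bplusF (replaceLast (a, as) t))) (tprod lam (lastT (a, as)) (Bp b bs))
   @ map (\<lambda>(c, t). (lam * c, bplusF (glue (a, as) t (b, bs)))) (tprod lam (lastT (a, as)) b)"
  by pat_completeness auto
termination
proof (relation "measure (\<lambda>(_, s, t). size s + size t)")
  fix lam :: 'k and a :: "'x atree" and as bs b
  have h: "size (lastT (a, as)) < Suc (size a + size_list (size_prod (\<lambda>_. 0) size) as)"
    by (rule size_lastT_less)
  show "((lam, lastT (a, as), Bp b bs), lam, Bp a as, Bp b bs) \<in> measure (\<lambda>(_, s, t). size s + size t)"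
    using h by simp
  show "((lam, lastT (a, as), b), lam, Bp a as, Bp b bs) \<in> measure (\<lambda>(_, s, t). size s + size t)"
    using h by simp
qed auto

definition fprod :: "'k::comm_ring_1 \<Rightarrow> 'x aforest \<Rightarrow> 'x aforest \<Rightarrow> ('k \<times> 'x aforest) list" where
  "fprod lam F G = map (\<lambda>(c, t). (c, glue F t G)) (tprod lam (lastT F) (fst G))"

definition dprod :: "'k::comm_ring_1 \<Rightarrow> ('x aforest \<Rightarrow>\<^sub>0 'k) \<Rightarrow> ('x aforest \<Rightarrow>\<^sub>0 'k) \<Rightarrow> ('x aforest \<Rightarrow>\<^sub>0 'k)" where
  "dprod lam p q = bilin_ext (\<lambda>F G. linL (fprod lam F G)) p q"

definition Bplus :: "('x aforest \<Rightarrow>\<^sub>0 'k::comm_ring_1) \<Rightarrow> ('x aforest \<Rightarrow>\<^sub>0 'k)" where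
  "Bplus p = lin_ext (\<lambda>F. basis (treeF (bplusF F))) p"

definition dprod_tens :: "'k::comm_ring_1 \<Rightarrow> ('x aforest \<times> 'x aforest \<Rightarrow>\<^sub>0 'k)
    \<Rightarrow> ('x aforest \<times> 'x aforest \<Rightarrow>\<^sub>0 'k) \<Rightarrow> ('x aforest \<times> 'x aforest \<Rightarrow>\<^sub>0 'k)" where
  "dprod_tens lam P Q = bilin_ext (\<lambda>(a, b) (c, d).
      tens (dprod lam (basis a) (basis c)) (dprod lam (basis b) (basis d))) P Q"

text \<open>Pieces of an admissible subforest: a rooted subtree F_v (v non-leaf) or a
  decoration occurrence of x.\<close>
datatype 'x piece = PTree "'x atree" | PDec 'x

text \<open>Quotient words: chosen rooted subtrees replaced by a leaf, chosen decoration
  occurrences replaced by the formal symbol \<star> (encoded as None).\<close>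
datatype 'x qtree = QLeaf | QB "'x qtree" "('x option \<times> 'x qtree) list"

text \<open>Enumeration of all admissible subforests: each choice is listed once, as the
  list of its pieces in left-to-right planar order together with the quotient word.
  At a non-leaf vertex either the whole rooted subtree is chosen, or not (and we
  recurse into the children); every decoration occurrence not inside a chosen
  subtree is either chosen or not.\<close>
fun cutsT :: "'x atree \<Rightarrow> ('x piece list \<times> 'x qtree) list"
and cutsL :: "('x \<times> 'x atree) list \<Rightarrow> ('x piece list \<times> ('x option \<times> 'x qtree) list) list" where
  "cutsT Leaf = [([], QLeaf)]"
| "cutsT (Bp a as) = ([PTree (Bp a as)], QLeaf) #
     concat (map (\<lambda>(p, q). map (\<lambda>(p', qs). (p @ p', QB q qs)) (cutsL as)) (cutsT a))"
| "cutsL [] = [([], [])]"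
| "cutsL ((x, t) # r) =
     concat (map (\<lambda>(d, s). concat (map (\<lambda>(p, q). map (\<lambda>(p', qr). (d @ p @ p', (s, q) # qr))
        (cutsL r)) (cutsT t))) [([PDec x], None), ([], Some x)])"

definition cutsF :: "'x aforest \<Rightarrow> ('x piece list \<times> ('x qtree \<times> ('x option \<times> 'x qtree) list)) list" where
  "cutsF F = concat (map (\<lambda>(p, q). map (\<lambda>(p', qs). (p @ p', (q, qs))) (cutsL (snd F))) (cutsT (fst F)))"

definition hat :: "'x piece \<Rightarrow> ('x aforest \<Rightarrow>\<^sub>0 'k::comm_ring_1)" where
  "hat P = (case P of PTree t \<Rightarrow> basis (treeF t) | PDec x \<Rightarrow> basis (decF x))"

definition cl :: "'k::comm_ring_1 \<Rightarrow> 'x piece list \<Rightarrow> ('x aforest \<Rightarrow>\<^sub>0 'k)" where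
  "cl lam ps = foldl (dprod lam) (basis bulletF) (map hat ps)"

definition csym :: "'x option \<Rightarrow> ('x aforest \<Rightarrow>\<^sub>0 'k::comm_ring_1)" where
  "csym s = (case s of None \<Rightarrow> basis bulletF | Some x \<Rightarrow> basis (decF x))"

fun evalQT :: "'k::comm_ring_1 \<Rightarrow> 'x qtree \<Rightarrow> ('x aforest \<Rightarrow>\<^sub>0 'k)"
and evalQL :: "'k::comm_ring_1 \<Rightarrow> ('x aforest \<Rightarrow>\<^sub>0 'k) \<Rightarrow> ('x option \<times> 'x qtree) list \<Rightarrow> ('x aforest \<Rightarrow>\<^sub>0 'k)" where
  "evalQT lam QLeaf = basis bulletF"
| "evalQT lam (QB q qs) = Bplus (evalQL lam (evalQT lam q) qs)"
| "evalQL lam acc [] = acc"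
| "evalQL lam acc ((s, t) # r) = evalQL lam (dprod lam (dprod lam acc (csym s)) (evalQT lam t)) r"

definition evalQW :: "'k::comm_ring_1 \<Rightarrow> 'x qtree \<times> ('x option \<times> 'x qtree) list \<Rightarrow> ('x aforest \<Rightarrow>\<^sub>0 'k)" where
  "evalQW lam W = evalQL lam (evalQT lam (fst W)) (snd W)"

definition deltaF :: "'k::comm_ring_1 \<Rightarrow> 'x aforest \<Rightarrow> ('x aforest \<times> 'x aforest \<Rightarrow>\<^sub>0 'k)" where
  "deltaF lam F = sum_list (map (\<lambda>(ps, W). tens (cl lam ps) (evalQW lam W)) (cutsF F))"

definition Delta_a :: "'k::comm_ring_1 \<Rightarrow> ('x aforest \<Rightarrow>\<^sub>0 'k) \<Rightarrow> ('x aforest \<times> 'x aforest \<Rightarrow>\<^sub>0 'k)" where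
  "Delta_a lam p = lin_ext (deltaF lam) p"

end

theory Submission
  imports Defs
begin

section \<open>Linear algebra on finitely supported functions\<close>

lemma lookup_smul [simp]: "Poly_Mapping.lookup (smul c p) a = c * Poly_Mapping.lookup p a"
  unfolding smul_def by (simp add: Poly_Mapping.map.rep_eq when_def)

lemma smul_add: "smul c (p + q) = smul c p + smul c q"
  by (rule poly_mapping_eqI) (simp add: lookup_add distrib_left)

lemma smul_add_left: "smul (c + d) p = smul c p + smul d p"
  by (rule poly_mapping_eqI) (simp add: lookup_add distrib_right)

lemma smul_smul [simp]: "smul c (smul d p) = smul (c * d) p"
  by (rule poly_mapping_eqI) (simp add: mult.assoc)

lemma smul_one [simp]: "smul 1 p = p"
  by (rule poly_mapping_eqI) simp

lemma smul_zero_left [simp]: "smul 0 p = 0"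
  by (rule poly_mapping_eqI) simp

lemma smul_zero [simp]: "smul c 0 = 0"
  by (rule poly_mapping_eqI) simp

lemma smul_single: "smul c (Poly_Mapping.single a d) = Poly_Mapping.single a (c * d)"
  by (rule poly_mapping_eqI) (simp add: lookup_single when_def)

lemma smul_basis: "smul c (basis a) = Poly_Mapping.single a c"
  unfolding basis_def by (simp add: smul_single)

lemma smul_sum: "smul c (sum f A) = (\<Sum>x\<in>A. smul c (f x))"
  by (rule poly_mapping_eqI) (simp add: lookup_sum sum_distrib_left)

lemma pm_expand: "p = (\<Sum>a\<in>Poly_Mapping.keys p. Poly_Mapping.single a (Poly_Mapping.lookup p a))"
proof (rule poly_mapping_eqI)
  fix k
  show "Poly_Mapping.lookup p k = Poly_Mapping.lookup (\<Sum>a\<in>Poly_Mapping.keys p. Poly_Mapping.single a (Poly_Mapping.lookup p a)) k"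
    by (simp add: lookup_sum lookup_single when_def in_keys_iff)
qed

lemma lin_ext_superset:
  assumes "finite S" "Poly_Mapping.keys p \<subseteq> S"
  shows "lin_ext f p = (\<Sum>a\<in>S. smul (Poly_Mapping.lookup p a) (f a))"
  unfolding lin_ext_def
  by (rule sum.mono_neutral_left) (use assms in \<open>auto simp: in_keys_iff\<close>)

lemma lin_ext_add: "lin_ext f (p + q) = lin_ext f p + lin_ext f q"
proof -
  let ?S = "Poly_Mapping.keys p \<union> Poly_Mapping.keys q"
  have f: "finite ?S" by simp
  have k: "Poly_Mapping.keys (p + q) \<subseteq> ?S" by (rule keys_add)
  show ?thesis
    by (simp add: lin_ext_superset[OF f k] lin_ext_superset[OF f, of p]
        lin_ext_superset[OF f, of q] lookup_add smul_add_left sum.distrib)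
qed

lemma keys_smul: "Poly_Mapping.keys (smul c p) \<subseteq> Poly_Mapping.keys p"
  by (auto simp: in_keys_iff)

lemma lin_ext_smul: "lin_ext f (smul c p) = smul c (lin_ext f p)"
proof -
  have f: "finite (Poly_Mapping.keys p)" by simp
  show ?thesis
    by (subst lin_ext_superset[OF f keys_smul]) (simp_all add: lin_ext_def smul_sum)
qed

definition linear_pm :: "(('a \<Rightarrow>\<^sub>0 'k::comm_ring_1) \<Rightarrow> ('b \<Rightarrow>\<^sub>0 'k)) \<Rightarrow> bool" where
  "linear_pm L \<longleftrightarrow> (\<forall>p q. L (p + q) = L p + L q) \<and> (\<forall>c p. L (smul c p) = smul c (L p))"

lemma linear_pmI:
  assumes "\<And>p q. L (p + q) = L p + L q" "\<And>c p. L (smul c p) = smul c (L p)"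
  shows "linear_pm L"
  using assms unfolding linear_pm_def by blast

lemma linear_pm_add: "linear_pm L \<Longrightarrow> L (p + q) = L p + L q"
  unfolding linear_pm_def by blast

lemma linear_pm_smul: "linear_pm L \<Longrightarrow> L (smul c p) = smul c (L p)"
  unfolding linear_pm_def by blast

lemma linear_pm_zero: "linear_pm L \<Longrightarrow> L 0 = 0"
  using linear_pm_smul[of L 0 0] by simp

lemma linear_lin_ext: "linear_pm (lin_ext f)"
  by (rule linear_pmI) (simp_all add: lin_ext_add lin_ext_smul)

lemma linear_pm_sum: "linear_pm L \<Longrightarrow> L (sum f A) = (\<Sum>x\<in>A. L (f x))"
  by (induction A rule: infinite_finite_induct) (simp_all add: linear_pm_zero linear_pm_add)

lemma linear_pm_sum_list: "linear_pm L \<Longrightarrow> L (sum_list (map f xs)) = sum_list (map (\<lambda>x. L (f x)) xs)"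
  by (induction xs) (simp_all add: linear_pm_zero linear_pm_add)

lemma lin_ext_single: "lin_ext f (Poly_Mapping.single a c) = smul c (f a)"
  by (cases "c = 0") (simp_all add: lin_ext_def)

lemma lin_ext_basis [simp]: "lin_ext f (basis a) = f a"
  by (simp add: basis_def lin_ext_single)

lemma lin_ext_zero [simp]: "lin_ext f 0 = 0"
  by (simp add: lin_ext_def)

lemma linear_pm_expand:
  assumes "linear_pm L"
  shows "L p = lin_ext (\<lambda>a. L (basis a)) p"
proof -
  have "L p = L (\<Sum>a\<in>Poly_Mapping.keys p. Poly_Mapping.single a (Poly_Mapping.lookup p a))"
    by (subst pm_expand) simp
  also have "\<dots> = (\<Sum>a\<in>Poly_Mapping.keys p. L (smul (Poly_Mapping.lookup p a) (basis a)))"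
    by (simp add: linear_pm_sum[OF assms] smul_basis)
  also have "\<dots> = lin_ext (\<lambda>a. L (basis a)) p"
    by (simp add: linear_pm_smul[OF assms] lin_ext_def)
  finally show ?thesis .
qed

lemma linear_pm_eqI:
  assumes "linear_pm La" "linear_pm Lb" "\<And>a. La (basis a) = Lb (basis a)"
  shows "La p = Lb p"
  using linear_pm_expand[OF assms(1), of p] linear_pm_expand[OF assms(2), of p] assms(3) by simp

lemma linear_pm_comp: "linear_pm L \<Longrightarrow> linear_pm M \<Longrightarrow> linear_pm (\<lambda>p. L (M p))"
  unfolding linear_pm_def by simp

lemma linear_pm_plus: "linear_pm L \<Longrightarrow> linear_pm M \<Longrightarrow> linear_pm (\<lambda>p. L p + M p)"
  unfolding linear_pm_def by (simp add: smul_add add_ac)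

lemma linear_pm_id: "linear_pm (\<lambda>p. p)"
  unfolding linear_pm_def by simp

lemma linear_pm_const_smul: "linear_pm L \<Longrightarrow> linear_pm (\<lambda>p. smul c (L p))"
  unfolding linear_pm_def by (simp add: smul_add mult.commute)

lemma lin_ext_comp: "linear_pm L \<Longrightarrow> L (lin_ext f p) = lin_ext (\<lambda>a. L (f a)) p"
  by (rule linear_pm_eqI[where La="\<lambda>p. L (lin_ext f p)"])
     (simp_all add: linear_pm_comp linear_lin_ext)

lemma lin_ext_cong: "(\<And>a. f a = g a) \<Longrightarrow> lin_ext f p = lin_ext g p"
  by (simp add: lin_ext_def)

lemma lin_ext_basis_id: "lin_ext basis p = p"
  using linear_pm_expand[OF linear_pm_id, of p] by simp

definition bilinear_pm :: "(('a \<Rightarrow>\<^sub>0 'k::comm_ring_1) \<Rightarrow> ('b \<Rightarrow>\<^sub>0 'k) \<Rightarrow> ('c \<Rightarrow>\<^sub>0 'k)) \<Rightarrow> bool" where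
  "bilinear_pm B \<longleftrightarrow> (\<forall>q. linear_pm (\<lambda>p. B p q)) \<and> (\<forall>p. linear_pm (B p))"

lemma bilin_ext_eq: "bilin_ext f p q = lin_ext (\<lambda>a. lin_ext (f a) q) p"
  by (simp add: bilin_ext_def lin_ext_def smul_sum mult.commute)

lemma bilin_ext_eq2: "bilin_ext f p q = lin_ext (\<lambda>b. lin_ext (\<lambda>a. f a b) p) q"
  unfolding bilin_ext_def lin_ext_def smul_sum
  by (subst sum.swap) (simp add: mult.commute)

lemma bilinear_bilin_ext: "bilinear_pm (bilin_ext f)"
  unfolding bilinear_pm_def
proof (intro allI conjI)
  fix q show "linear_pm (\<lambda>p. bilin_ext f p q)"
    unfolding bilin_ext_eq by (rule linear_lin_ext)
next
  fix p show "linear_pm (bilin_ext f p)"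
    unfolding bilin_ext_eq2[abs_def] by (rule linear_lin_ext)
qed

lemma bilin_ext_basis [simp]: "bilin_ext f (basis a) (basis b) = f a b"
  by (simp add: bilin_ext_eq)

lemma bilinear_pm_eqI:
  assumes "bilinear_pm Ba" "bilinear_pm Bb" "\<And>a b. Ba (basis a) (basis b) = Bb (basis a) (basis b)"
  shows "Ba p q = Bb p q"
proof -
  have l: "\<And>p. Ba p (basis b) = Bb p (basis b)" for b
    by (rule linear_pm_eqI[where La="\<lambda>p. Ba p (basis b)"])
       (use assms in \<open>auto simp: bilinear_pm_def\<close>)
  show ?thesis
    by (rule linear_pm_eqI[where La="Ba p"]) (use assms l in \<open>auto simp: bilinear_pm_def\<close>)
qed

lemma bilinear_pm_lin1: "bilinear_pm B \<Longrightarrow> linear_pm (\<lambda>p. B p q)"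
  unfolding bilinear_pm_def by blast
lemma bilinear_pm_lin2: "bilinear_pm B \<Longrightarrow> linear_pm (B p)"
  unfolding bilinear_pm_def by blast

lemma linL_Nil [simp]: "linL [] = 0"
  by (simp add: linL_def)
lemma linL_Cons: "linL ((c, a) # l) = Poly_Mapping.single a c + linL l"
  by (simp add: linL_def)
lemma linL_append: "linL (l1 @ l2) = linL l1 + linL l2"
  by (simp add: linL_def)

lemma lin_ext_linL: "lin_ext f (linL l) = sum_list (map (\<lambda>(c, a). smul c (f a)) l)"
  unfolding linL_def
  by (simp add: linear_pm_sum_list[OF linear_lin_ext] lin_ext_single case_prod_unfold)

lemma linear_linL_map: "linear_pm L \<Longrightarrow> L (linL l) = sum_list (map (\<lambda>(c, a). smul c (L (basis a))) l)"
  by (subst linear_pm_expand, assumption) (simp add: lin_ext_linL)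

lemma linL_map_eq: "linL (map (\<lambda>(c, t). (g c, f t)) l) = sum_list (map (\<lambda>(c, t). smul (g c) (basis (f t))) l)"
  unfolding linL_def by (simp add: case_prod_unfold smul_basis comp_def)

lemma linL_eq_sum: "linL l = sum_list (map (\<lambda>(c, t). smul c (basis t)) l)"
  unfolding linL_def by (simp add: case_prod_unfold smul_basis)

lemma bilinear_dprod: "bilinear_pm (dprod lam)"
  unfolding dprod_def[abs_def] by (rule bilinear_bilin_ext)

lemma lin_dprod1: "linear_pm (\<lambda>p. dprod lam p q)"
  by (rule bilinear_pm_lin1[OF bilinear_dprod])
lemma lin_dprod2: "linear_pm (dprod lam p)"
  by (rule bilinear_pm_lin2[OF bilinear_dprod])

lemma dprod_add1: "dprod lam (p + p') q = dprod lam p q + dprod lam p' q"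
  using linear_pm_add[OF lin_dprod1] .
lemma dprod_add2: "dprod lam p (q + q') = dprod lam p q + dprod lam p q'"
  using linear_pm_add[OF lin_dprod2] .
lemma dprod_smul1: "dprod lam (smul c p) q = smul c (dprod lam p q)"
  using linear_pm_smul[OF lin_dprod1] .
lemma dprod_smul2: "dprod lam p (smul c q) = smul c (dprod lam p q)"
  using linear_pm_smul[OF lin_dprod2] .
lemma dprod_zero1 [simp]: "dprod lam 0 q = 0"
  using linear_pm_zero[OF lin_dprod1] .
lemma dprod_zero2 [simp]: "dprod lam p 0 = 0"
  using linear_pm_zero[OF lin_dprod2] .
lemma dprod_basis: "dprod lam (basis F) (basis G) = linL (fprod lam F G)"
  by (simp add: dprod_def)

lemma bilinear_tens: "bilinear_pm tens"
  unfolding tens_def[abs_def] by (rule bilinear_bilin_ext)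
lemma lin_tens1: "linear_pm (\<lambda>p. tens p q)"
  by (rule bilinear_pm_lin1[OF bilinear_tens])
lemma lin_tens2: "linear_pm (tens p)"
  by (rule bilinear_pm_lin2[OF bilinear_tens])
lemma tens_add1: "tens (p + p') q = tens p q + tens p' q"
  using linear_pm_add[OF lin_tens1] .
lemma tens_add2: "tens p (q + q') = tens p q + tens p q'"
  using linear_pm_add[OF lin_tens2] .
lemma tens_smul1: "tens (smul c p) q = smul c (tens p q)"
  using linear_pm_smul[OF lin_tens1] .
lemma tens_smul2: "tens p (smul c q) = smul c (tens p q)"
  using linear_pm_smul[OF lin_tens2] .
lemma tens_zero1 [simp]: "tens 0 q = 0"
  using linear_pm_zero[OF lin_tens1] .
lemma tens_zero2 [simp]: "tens p 0 = 0"
  using linear_pm_zero[OF lin_tens2] .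
lemma tens_basis [simp]: "tens (basis a) (basis b) = basis (a, b)"
  by (simp add: tens_def)

lemma bilinear_dprod_tens: "bilinear_pm (dprod_tens lam)"
  unfolding dprod_tens_def[abs_def] by (rule bilinear_bilin_ext)
lemma lin_dt1: "linear_pm (\<lambda>p. dprod_tens lam p q)"
  by (rule bilinear_pm_lin1[OF bilinear_dprod_tens])
lemma lin_dt2: "linear_pm (dprod_tens lam p)"
  by (rule bilinear_pm_lin2[OF bilinear_dprod_tens])
lemma dt_add1: "dprod_tens lam (p + p') q = dprod_tens lam p q + dprod_tens lam p' q"
  using linear_pm_add[OF lin_dt1] .
lemma dt_add2: "dprod_tens lam p (q + q') = dprod_tens lam p q + dprod_tens lam p q'"
  using linear_pm_add[OF lin_dt2] .
lemma dt_smul1: "dprod_tens lam (smul c p) q = smul c (dprod_tens lam p q)"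
  using linear_pm_smul[OF lin_dt1] .
lemma dt_smul2: "dprod_tens lam p (smul c q) = smul c (dprod_tens lam p q)"
  using linear_pm_smul[OF lin_dt2] .
lemma dt_zero1 [simp]: "dprod_tens lam 0 q = 0"
  using linear_pm_zero[OF lin_dt1] .
lemma dt_zero2 [simp]: "dprod_tens lam p 0 = 0"
  using linear_pm_zero[OF lin_dt2] .
lemma dt_basis: "dprod_tens lam (basis (a, b)) (basis (c, d)) =
    tens (dprod lam (basis a) (basis c)) (dprod lam (basis b) (basis d))"
  by (simp add: dprod_tens_def)

lemma lin_Bplus: "linear_pm Bplus"
  unfolding Bplus_def[abs_def] by (rule linear_lin_ext)
lemma Bplus_add: "Bplus (p + q) = Bplus p + Bplus q"
  using linear_pm_add[OF lin_Bplus] .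
lemma Bplus_smul: "Bplus (smul c p) = smul c (Bplus p)"
  using linear_pm_smul[OF lin_Bplus] .
lemma Bplus_zero [simp]: "Bplus 0 = 0"
  using linear_pm_zero[OF lin_Bplus] .
lemma Bplus_basis: "Bplus (basis F) = basis (treeF (bplusF F))"
  by (simp add: Bplus_def)

lemma lin_Delta: "linear_pm (Delta_a lam)"
  unfolding Delta_a_def[abs_def] by (rule linear_lin_ext)
lemma Delta_add: "Delta_a lam (p + q) = Delta_a lam p + Delta_a lam q"
  using linear_pm_add[OF lin_Delta] .
lemma Delta_smul: "Delta_a lam (smul c p) = smul c (Delta_a lam p)"
  using linear_pm_smul[OF lin_Delta] .
lemma Delta_basis: "Delta_a lam (basis F) = deltaF lam F"
  by (simp add: Delta_a_def)

abbreviation MM :: "('x aforest \<times> 'x aforest \<Rightarrow>\<^sub>0 'k::comm_ring_1) \<Rightarrow> ('x aforest \<times> 'x aforest \<Rightarrow>\<^sub>0 'k)" where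
  "MM \<equiv> map_tens id Bplus"

lemma lin_MM: "linear_pm MM"
  unfolding map_tens_def[abs_def] by (rule linear_lin_ext)
lemma MM_add: "MM (p + q) = MM p + MM q"
  using linear_pm_add[OF lin_MM] .
lemma MM_smul: "MM (smul c p) = smul c (MM p)"
  using linear_pm_smul[OF lin_MM] .
lemma MM_zero [simp]: "MM 0 = 0"
  using linear_pm_zero[OF lin_MM] .

lemma bilinear_compose:
  assumes "bilinear_pm B" "linear_pm L" "linear_pm R"
  shows "bilinear_pm (\<lambda>p q. B (L p) (R q))"
  using assms unfolding bilinear_pm_def
  by (auto intro: linear_pm_comp[where L="\<lambda>x. B x _"] linear_pm_comp[where L="B _"])

lemma bilinear_post:
  assumes "bilinear_pm B" "linear_pm L"
  shows "bilinear_pm (\<lambda>p q. L (B p q))"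
  using assms unfolding bilinear_pm_def
  by (auto intro: linear_pm_comp[where L=L])

lemma MM_tens: "MM (tens p q) = tens p (Bplus q)"
proof -
  have "bilinear_pm (\<lambda>p q. MM (tens p q))"
    by (rule bilinear_post[OF bilinear_tens lin_MM])
  moreover have "bilinear_pm (\<lambda>p q. tens p (Bplus q))"
    using bilinear_compose[OF bilinear_tens linear_pm_id lin_Bplus] by simp
  ultimately show ?thesis
    by (rule bilinear_pm_eqI[where Ba="\<lambda>p q. MM (tens p q)"]) (simp add: map_tens_def)
qed

lemma tprod_Leaf2: "tprod lam t Leaf = [(1, t)]"
  by (cases t) simp_all

lemma lastT_bullet [simp]: "lastT bulletF = Leaf" by (simp add: lastT_def bulletF_def)

lemma fst_bullet [simp]: "fst bulletF = Leaf" by (simp add: bulletF_def)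

lemma glue_bullet_left: "glue bulletF (fst G) G = G"
  by (simp add: glue_def replaceLast_def bulletF_def)

lemma glue_bullet_right: "glue F (lastT F) bulletF = F"
  by (cases F) (auto simp: glue_def replaceLast_def bulletF_def lastT_def)

lemma dprod_unit_left: "dprod lam (basis bulletF) p = p"
proof (rule linear_pm_eqI[where La="dprod lam (basis bulletF)"])
  show "linear_pm (dprod lam (basis bulletF))" by (rule lin_dprod2)
  show "linear_pm (\<lambda>p. p)" by (rule linear_pm_id)
  fix G show "dprod lam (basis bulletF) (basis G) = basis G"
    by (simp add: dprod_basis fprod_def glue_bullet_left linL_Cons) (simp add: basis_def)
qed

lemma dprod_unit_right: "dprod lam p (basis bulletF) = p"
proof (rule linear_pm_eqI[where La="\<lambda>p. dprod lam p (basis bulletF)"])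
  show "linear_pm (\<lambda>p. dprod lam p (basis bulletF))" by (rule lin_dprod1)
  show "linear_pm (\<lambda>p. p)" by (rule linear_pm_id)
  fix G show "dprod lam (basis G) (basis bulletF) = basis G"
    by (simp add: dprod_basis fprod_def tprod_Leaf2 glue_bullet_right linL_Cons fst_bullet) (simp add: basis_def)
qed

lemma dt_tens: "dprod_tens lam (tens p q) (tens r s) = tens (dprod lam p r) (dprod lam q s)"
proof -
  have step1: "dprod_tens lam (tens p (basis b)) (tens r (basis d)) =
      tens (dprod lam p r) (dprod lam (basis b) (basis d))" for p r b d
  proof -
    have "bilinear_pm (\<lambda>p r. dprod_tens lam (tens p (basis b)) (tens r (basis d)))"
      by (rule bilinear_compose[OF bilinear_dprod_tens lin_tens1 lin_tens1])
    moreover have "bilinear_pm (\<lambda>p r. tens (dprod lam p r) (dprod lam (basis b) (basis d)))"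
      by (rule bilinear_post[OF bilinear_dprod lin_tens1])
    ultimately show ?thesis
      by (rule bilinear_pm_eqI[where Ba="\<lambda>p r. dprod_tens lam (tens p (basis b)) (tens r (basis d))"])
         (simp add: dt_basis)
  qed
  have "bilinear_pm (\<lambda>q s. dprod_tens lam (tens p q) (tens r s))"
    by (rule bilinear_compose[OF bilinear_dprod_tens lin_tens2 lin_tens2])
  moreover have "bilinear_pm (\<lambda>q s. tens (dprod lam p r) (dprod lam q s))"
    by (rule bilinear_post[OF bilinear_dprod lin_tens2])
  ultimately show ?thesis
    by (rule bilinear_pm_eqI[where Ba="\<lambda>q s. dprod_tens lam (tens p q) (tens r s)"])
       (simp add: step1)
qed

abbreviation oneT :: "('x aforest \<times> 'x aforest \<Rightarrow>\<^sub>0 'k::comm_ring_1)" where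
  "oneT \<equiv> tens (basis bulletF) (basis bulletF)"

lemma dt_unit_left:
  fixes X :: "('x aforest \<times> 'x aforest \<Rightarrow>\<^sub>0 'k::comm_ring_1)"
  shows "dprod_tens lam oneT X = X"
proof (rule linear_pm_eqI[where La="dprod_tens lam oneT"])
  show "linear_pm (dprod_tens lam oneT)" by (rule lin_dt2)
  show "linear_pm (\<lambda>p. p)" by (rule linear_pm_id)
  fix ab :: "'x aforest \<times> 'x aforest"
  obtain a b where "ab = (a, b)" by (cases ab)
  then show "dprod_tens lam oneT (basis ab) = basis ab"
    using dt_tens[of lam "basis bulletF" "basis bulletF" "basis a" "basis b"]
    by (simp add: dprod_unit_left)
qed

lemma dt_unit_right:
  fixes X :: "('x aforest \<times> 'x aforest \<Rightarrow>\<^sub>0 'k::comm_ring_1)"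
  shows "dprod_tens lam X oneT = X"
proof (rule linear_pm_eqI[where La="\<lambda>X. dprod_tens lam X oneT"])
  show "linear_pm (\<lambda>X. dprod_tens lam X oneT)" by (rule lin_dt1)
  show "linear_pm (\<lambda>p. p)" by (rule linear_pm_id)
  fix ab :: "'x aforest \<times> 'x aforest"
  obtain a b where "ab = (a, b)" by (cases ab)
  then show "dprod_tens lam (basis ab) oneT = basis ab"
    using dt_tens[of lam "basis a" "basis b" "basis bulletF" "basis bulletF"]
    by (simp add: dprod_unit_right)
qed

lemma trilinear_eqI:
  assumes "\<And>r. bilinear_pm (\<lambda>p q. Ta p q r)" "\<And>r. bilinear_pm (\<lambda>p q. Tb p q r)"
    "\<And>p q. linear_pm (Ta p q)" "\<And>p q. linear_pm (Tb p q)"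
    "\<And>a b c. Ta (basis a) (basis b) (basis c) = Tb (basis a) (basis b) (basis c)"
  shows "Ta p q r = Tb p q r"
proof -
  have "Ta p q (basis c) = Tb p q (basis c)" for c
    by (rule bilinear_pm_eqI[where Ba="\<lambda>p q. Ta p q (basis c)"]) (use assms in auto)
  then show ?thesis
    by (rule linear_pm_eqI[where La="Ta p q", rotated 2]) (use assms in auto)
qed

lemma dt_assoc_from:
  fixes X Y Z :: "('x aforest \<times> 'x aforest \<Rightarrow>\<^sub>0 'k::comm_ring_1)"
  assumes A: "\<And>p q r :: 'x aforest \<Rightarrow>\<^sub>0 'k. dprod lam (dprod lam p q) r = dprod lam p (dprod lam q r)"
  shows "dprod_tens lam (dprod_tens lam X Y) Z = dprod_tens lam X (dprod_tens lam Y Z)"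
proof (rule trilinear_eqI[where Ta="\<lambda>X Y Z. dprod_tens lam (dprod_tens lam X Y) Z"])
  fix Z
  show "bilinear_pm (\<lambda>X Y. dprod_tens lam (dprod_tens lam X Y) Z)"
    by (rule bilinear_post[OF bilinear_dprod_tens lin_dt1])
  show "bilinear_pm (\<lambda>X Y. dprod_tens lam X (dprod_tens lam Y Z))"
    using bilinear_compose[OF bilinear_dprod_tens linear_pm_id lin_dt1[of lam Z]] by simp
next
  fix X Y
  show "linear_pm (dprod_tens lam (dprod_tens lam X Y))" by (rule lin_dt2)
  show "linear_pm (\<lambda>Z. dprod_tens lam X (dprod_tens lam Y Z))"
    by (rule linear_pm_comp[OF lin_dt2 lin_dt2])
next
  fix ab cd ef :: "'x aforest \<times> 'x aforest"
  obtain a b c d e f where "ab = (a, b)" "cd = (c, d)" "ef = (e, f)" by (metis surj_pair)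
  then show "dprod_tens lam (dprod_tens lam (basis ab) (basis cd)) (basis ef) =
             dprod_tens lam (basis ab) (dprod_tens lam (basis cd) (basis ef))"
    using dt_tens[of lam "basis a" "basis b" "basis c" "basis d"]
      dt_tens[of lam "basis c" "basis d" "basis e" "basis f"]
      dt_tens[of lam "dprod lam (basis a) (basis c)" "dprod lam (basis b) (basis d)" "basis e" "basis f"]
      dt_tens[of lam "basis a" "basis b" "dprod lam (basis c) (basis e)" "dprod lam (basis d) (basis f)"]
    by (simp add: A)
qed

definition TP :: "'k::comm_ring_1 \<Rightarrow> 'x atree \<Rightarrow> 'x atree \<Rightarrow> ('x atree \<Rightarrow>\<^sub>0 'k)" where
  "TP lam s t = linL (tprod lam s t)"

definition GL :: "'x aforest \<Rightarrow> 'x aforest \<Rightarrow> ('x atree \<Rightarrow>\<^sub>0 'k::comm_ring_1) \<Rightarrow> ('x aforest \<Rightarrow>\<^sub>0 'k)" where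
  "GL F G = lin_ext (\<lambda>t. basis (glue F t G))"

definition iota :: "('x atree \<Rightarrow>\<^sub>0 'k::comm_ring_1) \<Rightarrow> ('x aforest \<Rightarrow>\<^sub>0 'k)" where
  "iota = lin_ext (\<lambda>t. basis (treeF t))"

lemma lin_GL: "linear_pm (GL F G)"
  unfolding GL_def by (rule linear_lin_ext)
lemma lin_iota: "linear_pm iota"
  unfolding iota_def by (rule linear_lin_ext)

lemma dprod_GL: "dprod lam (basis F) (basis G) = GL F G (TP lam (lastT F) (fst G))"
  unfolding dprod_basis fprod_def TP_def GL_def
  unfolding lin_ext_linL
  unfolding linL_eq_sum
  by (simp add: case_prod_unfold comp_def)

lemma glue_treeF_left [simp]: "glue (treeF s) t G = (t, snd G)"
  by (simp add: glue_def replaceLast_def treeF_def)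
lemma glue_treeF_right [simp]: "glue F t (treeF s) = replaceLast F t"
  by (simp add: glue_def treeF_def)
lemma replaceLast_treeF [simp]: "replaceLast (treeF s) t = treeF t"
  by (simp add: replaceLast_def treeF_def)
lemma lastT_treeF [simp]: "lastT (treeF s) = s"
  by (simp add: lastT_def treeF_def)
lemma fst_treeF [simp]: "fst (treeF s) = s"
  by (simp add: treeF_def)
lemma snd_treeF [simp]: "snd (treeF s) = []"
  by (simp add: treeF_def)
lemma lastT_replaceLast [simp]: "lastT (replaceLast F t) = t"
  by (simp add: lastT_def replaceLast_def)
lemma glue_replaceLast [simp]: "glue (replaceLast F t) t' G = glue F t' G"
  by (simp add: glue_def replaceLast_def)
lemma glue_pair_snd: "glue F t' (t, snd G) = glue F t' G"
  by (simp add: glue_def)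
lemma lastT_glue: "snd G \<noteq> [] \<Longrightarrow> lastT (glue F t G) = lastT G"
  by (simp add: lastT_def glue_def)
lemma fst_glue: "snd F \<noteq> [] \<Longrightarrow> fst (glue F t G) = fst F"
  by (simp add: glue_def replaceLast_def)
lemma glue_glue: "snd F2 \<noteq> [] \<Longrightarrow> glue (glue F1 t F2) t' F3 = glue F1 t (glue F2 t' F3)"
  by (cases "snd F1 = []") (auto simp: glue_def replaceLast_def butlast_append)

lemma TT_iota: "dprod lam (basis (treeF s)) (basis (treeF t)) = iota (TP lam s t)"
  by (simp add: dprod_GL GL_def iota_def)

lemma lookup_iota: "Poly_Mapping.lookup (iota r) (treeF t) = Poly_Mapping.lookup r t"
proof -
  have "Poly_Mapping.lookup (iota r) (treeF t) =
      (\<Sum>a\<in>Poly_Mapping.keys r. Poly_Mapping.lookup r a * (if a = t then 1 else 0))"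
    by (simp add: iota_def lin_ext_def lookup_sum basis_def lookup_single when_def treeF_def)
  also have "\<dots> = (\<Sum>a\<in>Poly_Mapping.keys r. if a = t then Poly_Mapping.lookup r a else 0)"
    by (rule sum.cong) auto
  also have "\<dots> = Poly_Mapping.lookup r t"
    by (simp add: in_keys_iff)
  finally show ?thesis .
qed

lemma iota_inj:
  assumes "iota p = iota q" shows "p = q"
proof (rule poly_mapping_eqI)
  fix t show "Poly_Mapping.lookup p t = Poly_Mapping.lookup q t"
    using lookup_iota[of p t] lookup_iota[of q t] assms by metis
qed

section \<open>Rota-Baxter identity for Bplus\<close>

lemma smul_sum_list: "smul c (sum_list xs) = sum_list (map (smul c) xs)"
  by (induction xs) (simp_all add: smul_add)

lemma Bplus_linL: "Bplus (linL l) = sum_list (map (\<lambda>(c, F). smul c (basis (treeF (bplusF F)))) l)"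
  by (simp add: linear_linL_map[OF lin_Bplus] Bplus_basis)

lemma bplusF_pair [simp]: "bplusF (a, as) = Bp a as"
  by (simp add: bplusF_def)

lemma RB_basis:
  "dprod lam (Bplus (basis S)) (Bplus (basis T)) =
   Bplus (dprod lam (Bplus (basis S)) (basis T) + dprod lam (basis S) (Bplus (basis T))
          + smul lam (dprod lam (basis S) (basis T)))"
proof -
  obtain a as where S: "S = (a, as)" by fastforce
  obtain b bs where T: "T = (b, bs)" by fastforce
  show ?thesis
    unfolding S T Bplus_basis bplusF_pair dprod_basis fprod_def
    by (simp add: Bplus_add Bplus_smul Bplus_basis linL_eq_sum smul_sum_list
          linear_pm_sum_list[OF lin_Bplus] case_prod_unfold comp_def bplusF_def)
qed

lemma bilinear_plus:
  "bilinear_pm Ba \<Longrightarrow> bilinear_pm Bb \<Longrightarrow> bilinear_pm (\<lambda>p q. Ba p q + Bb p q)"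
  unfolding bilinear_pm_def by (auto intro: linear_pm_plus)

lemma bilinear_csmul:
  "bilinear_pm B \<Longrightarrow> bilinear_pm (\<lambda>p q. smul c (B p q))"
  unfolding bilinear_pm_def by (auto intro: linear_pm_const_smul)

lemma RB:
  "dprod lam (Bplus p) (Bplus q) =
   Bplus (dprod lam (Bplus p) q + dprod lam p (Bplus q) + smul lam (dprod lam p q))"
proof -
  have b1: "bilinear_pm (\<lambda>p q. dprod lam (Bplus p) (Bplus q))"
    by (rule bilinear_compose[OF bilinear_dprod lin_Bplus lin_Bplus])
  have b2: "bilinear_pm (\<lambda>p q. Bplus (dprod lam (Bplus p) q + dprod lam p (Bplus q) + smul lam (dprod lam p q)))"
    apply (rule bilinear_post[OF _ lin_Bplus])
    apply (rule bilinear_plus)+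
      apply (rule bilinear_compose[OF bilinear_dprod lin_Bplus linear_pm_id, simplified])
     apply (rule bilinear_compose[OF bilinear_dprod linear_pm_id lin_Bplus, simplified])
    apply (rule bilinear_csmul[OF bilinear_dprod])
    done
  show ?thesis
    by (rule bilinear_pm_eqI[OF b1 b2]) (rule RB_basis)
qed

definition sz :: "'x aforest \<Rightarrow> nat" where
  "sz F = size (bplusF F)"

lemma sz_treeF: "sz (treeF t) = Suc (size t)"
  by (simp add: sz_def treeF_def bplusF_def)

lemma sz_lastT: "sz (treeF (lastT F)) \<le> sz F"
proof -
  obtain a as where F: "F = (a, as)" by fastforce
  show ?thesis using size_lastT_less[of a as] unfolding sz_treeF by (simp add: F sz_def)
qed

lemma sz_fst: "sz (treeF (fst F)) \<le> sz F"
  unfolding sz_treeF by (cases F) (simp add: sz_def)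

lemma sz_Bp: "sz (treeF (Bp a as)) = Suc (sz (a, as))"
  unfolding sz_treeF by (simp add: sz_def)

section \<open>Associativity\<close>

abbreviation assocB :: "'k::comm_ring_1 \<Rightarrow> 'x aforest \<Rightarrow> 'x aforest \<Rightarrow> 'x aforest \<Rightarrow> bool" where
  "assocB lam F1 F2 F3 \<equiv> dprod lam (dprod lam (basis F1) (basis F2)) (basis F3)
      = dprod lam (basis F1) (dprod lam (basis F2) (basis F3))"

lemma treeF_Leaf: "treeF Leaf = bulletF"
  by (simp add: treeF_def bulletF_def)

lemma treeF_Bp: "basis (treeF (Bp a as)) = Bplus (basis (a, as))"
  by (simp add: Bplus_basis)

lemma tree_assoc_step:
  fixes lam :: "'k::comm_ring_1"
  assumes IH: "\<And>F1 F2 F3 :: 'x aforest. sz F1 + sz F2 + sz F3 < N \<Longrightarrow> assocB lam F1 F2 F3"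
    and N: "sz (treeF s) + sz (treeF t) + sz (treeF u) \<le> N"
  shows "assocB lam (treeF s) (treeF t) (treeF (u :: 'x atree))"
proof (cases "s = Leaf \<or> t = Leaf \<or> u = Leaf")
  case True
  then show ?thesis
    by (auto simp: treeF_Leaf dprod_unit_left dprod_unit_right)
next
  case False
  then obtain a as b bs c cs where s: "s = Bp a as" and t: "t = Bp b bs" and u: "u = Bp c cs"
    by (metis atree.exhaust)
  define S where "S = (basis (a, as) :: 'x aforest \<Rightarrow>\<^sub>0 'k)"
  define T where "T = (basis (b, bs) :: 'x aforest \<Rightarrow>\<^sub>0 'k)"
  define U where "U = (basis (c, cs) :: 'x aforest \<Rightarrow>\<^sub>0 'k)"
  have ss: "basis (treeF s) = Bplus S" by (simp add: s S_def treeF_Bp)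
  have tt: "basis (treeF t) = Bplus T" by (simp add: t T_def treeF_Bp)
  have uu: "basis (treeF u) = Bplus U" by (simp add: u U_def treeF_Bp)
  have szs: "sz (a, as) < sz (treeF s)" "sz (b, bs) < sz (treeF t)" "sz (c, cs) < sz (treeF u)"
    by (simp_all add: s t u sz_Bp)
  note I = IH[unfolded ss[symmetric] tt[symmetric] uu[symmetric]]
  let ?p = "dprod lam"
  have i1: "?p (?p (Bplus S) (Bplus T)) U = ?p (Bplus S) (?p (Bplus T) U)"
    using IH[of "treeF s" "treeF t" "(c, cs)"] szs N by (simp add: ss tt U_def)
  have i2: "?p (?p (Bplus S) T) (Bplus U) = ?p (Bplus S) (?p T (Bplus U))"
    using IH[of "treeF s" "(b, bs)" "treeF u"] szs N by (simp add: ss uu T_def)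
  have i3: "?p (?p S (Bplus T)) (Bplus U) = ?p S (?p (Bplus T) (Bplus U))"
    using IH[of "(a, as)" "treeF t" "treeF u"] szs N by (simp add: tt uu S_def)
  have i4: "?p (?p S T) (Bplus U) = ?p S (?p T (Bplus U))"
    using IH[of "(a, as)" "(b, bs)" "treeF u"] szs N by (simp add: uu S_def T_def)
  have i5: "?p (?p (Bplus S) T) U = ?p (Bplus S) (?p T U)"
    using IH[of "treeF s" "(b, bs)" "(c, cs)"] szs N by (simp add: ss T_def U_def)
  have i6: "?p (?p S (Bplus T)) U = ?p S (?p (Bplus T) U)"
    using IH[of "(a, as)" "treeF t" "(c, cs)"] szs N by (simp add: tt S_def U_def)
  have i7: "?p (?p S T) U = ?p S (?p T U)"
    using IH[of "(a, as)" "(b, bs)" "(c, cs)"] szs N by (simp add: S_def T_def U_def)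
  define Z where "Z = ?p (Bplus S) T + ?p S (Bplus T) + smul lam (?p S T)"
  define W where "W = ?p (Bplus T) U + ?p T (Bplus U) + smul lam (?p T U)"
  have st: "?p (Bplus S) (Bplus T) = Bplus Z" unfolding Z_def by (rule RB)
  have tu: "?p (Bplus T) (Bplus U) = Bplus W" unfolding W_def by (rule RB)
  have "?p (?p (Bplus S) (Bplus T)) (Bplus U) = ?p (Bplus Z) (Bplus U)" using st by simp
  also have "\<dots> = Bplus (?p (Bplus Z) U + ?p Z (Bplus U) + smul lam (?p Z U))" by (rule RB)
  also have "\<dots> = Bplus (?p (?p (Bplus S) (Bplus T)) U
        + (?p (?p (Bplus S) T) (Bplus U) + ?p (?p S (Bplus T)) (Bplus U) + smul lam (?p (?p S T) (Bplus U)))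
        + smul lam (?p (?p (Bplus S) T) U + ?p (?p S (Bplus T)) U + smul lam (?p (?p S T) U)))"
    unfolding st Z_def by (simp add: dprod_add1 dprod_smul1)
  finally have L: "?p (?p (Bplus S) (Bplus T)) (Bplus U) = Bplus (?p (?p (Bplus S) (Bplus T)) U
        + (?p (?p (Bplus S) T) (Bplus U) + ?p (?p S (Bplus T)) (Bplus U) + smul lam (?p (?p S T) (Bplus U)))
        + smul lam (?p (?p (Bplus S) T) U + ?p (?p S (Bplus T)) U + smul lam (?p (?p S T) U)))" .
  have "?p (Bplus S) (?p (Bplus T) (Bplus U)) = ?p (Bplus S) (Bplus W)" using tu by simp
  also have "\<dots> = Bplus (?p (Bplus S) W + ?p S (Bplus W) + smul lam (?p S W))" by (rule RB)
  also have "\<dots> = Bplus ((?p (Bplus S) (?p (Bplus T) U) + ?p (Bplus S) (?p T (Bplus U)) + smul lam (?p (Bplus S) (?p T U)))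
        + ?p S (?p (Bplus T) (Bplus U))
        + smul lam (?p S (?p (Bplus T) U) + ?p S (?p T (Bplus U)) + smul lam (?p S (?p T U))))"
    unfolding tu W_def by (simp add: dprod_add2 dprod_smul2)
  finally have R: "?p (Bplus S) (?p (Bplus T) (Bplus U)) = Bplus ((?p (Bplus S) (?p (Bplus T) U) + ?p (Bplus S) (?p T (Bplus U)) + smul lam (?p (Bplus S) (?p T U)))
        + ?p S (?p (Bplus T) (Bplus U))
        + smul lam (?p S (?p (Bplus T) U) + ?p S (?p T (Bplus U)) + smul lam (?p S (?p T U))))" .
  show ?thesis
    unfolding ss tt uu L R i1 i2 i3 i4 i5 i6 i7
    by (simp add: smul_add add_ac)
qed

lemma lin_ext_swap: "lin_ext (\<lambda>t. lin_ext (\<lambda>t'. h t t') Q) P = lin_ext (\<lambda>t'. lin_ext (\<lambda>t. h t t') P) Q"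
  using bilin_ext_eq[of h P Q] bilin_ext_eq2[of h P Q] by simp

lemma dprod_left_lin_ext: "dprod lam (lin_ext f X) Y = lin_ext (\<lambda>t. dprod lam (f t) Y) X"
  by (rule lin_ext_comp[OF lin_dprod1])

lemma dprod_right_lin_ext: "dprod lam Y (lin_ext f X) = lin_ext (\<lambda>t. dprod lam Y (f t)) X"
  by (rule lin_ext_comp[OF lin_dprod2])

lemma tree_assoc_TP:
  assumes "assocB lam (treeF s) (treeF t) (treeF u)"
  shows "lin_ext (\<lambda>v. TP lam v u) (TP lam s t) = lin_ext (TP lam s) (TP lam t u)"
proof (rule iota_inj)
  have "iota (lin_ext (\<lambda>v. TP lam v u) (TP lam s t)) = lin_ext (\<lambda>v. iota (TP lam v u)) (TP lam s t)"
    by (rule lin_ext_comp[OF lin_iota])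
  also have "\<dots> = lin_ext (\<lambda>v. dprod lam (basis (treeF v)) (basis (treeF u))) (TP lam s t)"
    by (simp add: TT_iota)
  also have "\<dots> = dprod lam (iota (TP lam s t)) (basis (treeF u))"
    by (simp add: iota_def dprod_left_lin_ext)
  also have "\<dots> = dprod lam (dprod lam (basis (treeF s)) (basis (treeF t))) (basis (treeF u))"
    by (simp add: TT_iota)
  finally have 1: "iota (lin_ext (\<lambda>v. TP lam v u) (TP lam s t)) = \<dots>" .
  have "iota (lin_ext (TP lam s) (TP lam t u)) = lin_ext (\<lambda>v. iota (TP lam s v)) (TP lam t u)"
    by (rule lin_ext_comp[OF lin_iota])
  also have "\<dots> = lin_ext (\<lambda>v. dprod lam (basis (treeF s)) (basis (treeF v))) (TP lam t u)"
    by (simp add: TT_iota)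
  also have "\<dots> = dprod lam (basis (treeF s)) (iota (TP lam t u))"
    by (simp add: iota_def dprod_right_lin_ext)
  also have "\<dots> = dprod lam (basis (treeF s)) (dprod lam (basis (treeF t)) (basis (treeF u)))"
    by (simp add: TT_iota)
  finally have 2: "iota (lin_ext (TP lam s) (TP lam t u)) = \<dots>" .
  show "iota (lin_ext (\<lambda>v. TP lam v u) (TP lam s t)) = iota (lin_ext (TP lam s) (TP lam t u))"
    unfolding 1 2 by (rule assms)
qed

lemma forest_assoc_step:
  fixes lam :: "'k::comm_ring_1"
  assumes IH: "\<And>F1 F2 F3 :: 'x aforest. sz F1 + sz F2 + sz F3 < N \<Longrightarrow> assocB lam F1 F2 F3"
    and N: "sz F1 + sz F2 + sz F3 \<le> N"
  shows "assocB lam F1 F2 (F3 :: 'x aforest)"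
proof -
  have L0: "dprod lam (dprod lam (basis F1) (basis F2)) (basis F3) =
      lin_ext (\<lambda>t. dprod lam (basis (glue F1 t F2)) (basis F3)) (TP lam (lastT F1) (fst F2))"
    by (simp add: dprod_GL[of lam F1 F2] GL_def dprod_left_lin_ext)
  have R0: "dprod lam (basis F1) (dprod lam (basis F2) (basis F3)) =
      lin_ext (\<lambda>t. dprod lam (basis F1) (basis (glue F2 t F3))) (TP lam (lastT F2) (fst F3))"
    by (simp add: dprod_GL[of lam F2 F3] GL_def dprod_right_lin_ext)
  show ?thesis
  proof (cases "snd F2 = []")
    case False
    have "dprod lam (basis (glue F1 t F2)) (basis F3) =
        lin_ext (\<lambda>t'. basis (glue F1 t (glue F2 t' F3))) (TP lam (lastT F2) (fst F3))" for t
      by (simp add: dprod_GL GL_def lastT_glue[OF False] glue_glue[OF False])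
    moreover have "dprod lam (basis F1) (basis (glue F2 t' F3)) =
        lin_ext (\<lambda>t. basis (glue F1 t (glue F2 t' F3))) (TP lam (lastT F1) (fst F2))" for t'
      by (simp add: dprod_GL GL_def fst_glue[OF False])
    ultimately show ?thesis
      unfolding L0 R0 by (simp only: lin_ext_swap[of _ "TP lam (lastT F2) (fst F3)"])
  next
    case True
    obtain b where F2: "F2 = treeF b" using True by (cases F2) (simp add: treeF_def)
    have "dprod lam (basis (glue F1 t F2)) (basis F3) = GL F1 F3 (TP lam t (fst F3))" for t
      by (simp add: F2 dprod_GL GL_def)
    then have L: "dprod lam (dprod lam (basis F1) (basis F2)) (basis F3) =
        GL F1 F3 (lin_ext (\<lambda>t. TP lam t (fst F3)) (TP lam (lastT F1) b))"
      unfolding L0 by (simp add: F2 lin_ext_comp[OF lin_GL])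
    have "dprod lam (basis F1) (basis (glue F2 t F3)) = GL F1 F3 (TP lam (lastT F1) t)" for t
      by (simp add: F2 dprod_GL GL_def glue_pair_snd)
    then have R: "dprod lam (basis F1) (dprod lam (basis F2) (basis F3)) =
        GL F1 F3 (lin_ext (TP lam (lastT F1)) (TP lam b (fst F3)))"
      unfolding R0 by (simp add: F2 lin_ext_comp[OF lin_GL])
    have "sz (treeF (lastT F1)) + sz (treeF b) + sz (treeF (fst F3)) \<le> N"
      using N sz_lastT[of F1] sz_fst[of F3] F2 by simp
    then have "assocB lam (treeF (lastT F1)) (treeF b) (treeF (fst F3))"
      using tree_assoc_step[OF IH] by blast
    then show ?thesis
      unfolding L R by (simp add: tree_assoc_TP)
  qed
qed

lemma assoc_basis:
  fixes lam :: "'k::comm_ring_1" and F1 F2 F3 :: "'x aforest"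
  shows "assocB lam F1 F2 F3"
proof (induction "sz F1 + sz F2 + sz F3" arbitrary: F1 F2 F3 rule: less_induct)
  case less
  show ?case
  proof (rule forest_assoc_step[where N="sz F1 + sz F2 + sz F3"])
    fix G1 G2 G3 :: "'x aforest"
    assume "sz G1 + sz G2 + sz G3 < sz F1 + sz F2 + sz F3"
    then show "assocB lam G1 G2 G3" by (rule less)
  qed simp
qed

lemma dprod_assoc: "dprod lam (dprod lam p q) r = dprod lam p (dprod lam q r)"
proof (rule trilinear_eqI[where Ta="\<lambda>p q r. dprod lam (dprod lam p q) r"])
  fix r
  show "bilinear_pm (\<lambda>p q. dprod lam (dprod lam p q) r)"
    by (rule bilinear_post[OF bilinear_dprod lin_dprod1])
  show "bilinear_pm (\<lambda>p q. dprod lam p (dprod lam q r))"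
    using bilinear_compose[OF bilinear_dprod linear_pm_id lin_dprod1[of lam r]] by simp
next
  fix p q
  show "linear_pm (dprod lam (dprod lam p q))" by (rule lin_dprod2)
  show "linear_pm (\<lambda>r. dprod lam p (dprod lam q r))"
    by (rule linear_pm_comp[OF lin_dprod2 lin_dprod2])
next
  fix a b c show "assocB lam a b c" by (rule assoc_basis)
qed

lemma dt_assoc: "dprod_tens lam (dprod_tens lam X Y) Z = dprod_tens lam X (dprod_tens lam Y Z)"
  by (rule dt_assoc_from[OF dprod_assoc])

section \<open>Factorisation of the coproduct on words\<close>

declare tens_basis[simp del]

abbreviation bul :: "'x aforest \<Rightarrow>\<^sub>0 'k::comm_ring_1" where "bul \<equiv> basis bulletF"

lemma foldl_dprod: "foldl (dprod lam) acc xs = dprod lam acc (foldl (dprod lam) (basis bulletF) xs)"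
proof (induction xs arbitrary: acc)
  case Nil then show ?case by (simp add: dprod_unit_right)
next
  case (Cons x xs)
  show ?case
    using Cons[of "dprod lam acc x"] Cons[of "dprod lam (basis bulletF) x"]
    by (simp add: dprod_unit_left dprod_assoc)
qed

lemma cl_Nil [simp]: "cl lam [] = basis bulletF"
  by (simp add: cl_def)

lemma cl_append: "cl lam (p @ p') = dprod lam (cl lam p) (cl lam p')"
  unfolding cl_def by (simp add: foldl_dprod[of lam "foldl _ _ _"])

lemma cl_single: "cl lam [P] = hat P"
  by (simp add: cl_def dprod_unit_left)

lemma evalQL_acc: "evalQL lam acc qs = dprod lam acc (evalQL lam (basis bulletF) qs)"
proof (induction qs arbitrary: acc)
  case Nil then show ?case by (simp add: dprod_unit_right)
next
  case (Cons st r)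
  obtain s t where st: "st = (s, t)" by fastforce
  show ?case
    using Cons[of "dprod lam (dprod lam acc (csym s)) (evalQT lam t)"]
      Cons[of "dprod lam (dprod lam (basis bulletF) (csym s)) (evalQT lam t)"]
    by (simp add: st dprod_unit_left dprod_assoc)
qed

lemma evalQL_Cons: "evalQL lam (basis bulletF) ((s, t) # r) =
    dprod lam (csym s) (dprod lam (evalQT lam t) (evalQL lam (basis bulletF) r))"
  by (simp add: evalQL_acc[of lam "dprod lam _ _"] dprod_unit_left dprod_assoc)

lemma sum_list_concat_map:
  "sum_list (map f (concat (map g xs))) = sum_list (map (\<lambda>x. sum_list (map f (g x))) xs)"
  by (induction xs) simp_all

lemma tens_dprod: "tens (dprod lam a b) (dprod lam c d) = dprod_tens lam (tens a c) (tens b d)"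
  by (simp add: dt_tens)

definition DT :: "'k::comm_ring_1 \<Rightarrow> 'x atree \<Rightarrow> ('x aforest \<times> 'x aforest \<Rightarrow>\<^sub>0 'k)" where
  "DT lam t = sum_list (map (\<lambda>(ps, q). tens (cl lam ps) (evalQT lam q)) (cutsT t))"

definition DL :: "'k::comm_ring_1 \<Rightarrow> ('x \<times> 'x atree) list \<Rightarrow> ('x aforest \<times> 'x aforest \<Rightarrow>\<^sub>0 'k)" where
  "DL lam l = sum_list (map (\<lambda>(ps, qs). tens (cl lam ps) (evalQL lam (basis bulletF) qs)) (cutsL l))"

definition EE :: "'k::comm_ring_1 \<Rightarrow> 'x \<Rightarrow> ('x aforest \<times> 'x aforest \<Rightarrow>\<^sub>0 'k)" where
  "EE lam x = tens (basis (decF x)) (basis bulletF) + tens (basis bulletF) (basis (decF x))"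

lemma dt_sum_list_left: "dprod_tens lam (sum_list (map f xs)) Y = sum_list (map (\<lambda>x. dprod_tens lam (f x) Y) xs)"
  by (rule linear_pm_sum_list[OF lin_dt1])
lemma dt_sum_list_right: "dprod_tens lam Y (sum_list (map f xs)) = sum_list (map (\<lambda>x. dprod_tens lam Y (f x)) xs)"
  by (rule linear_pm_sum_list[OF lin_dt2])

lemma dt_sum_sum: "dprod_tens lam (sum_list (map f xs)) (sum_list (map g ys)) =
   sum_list (map (\<lambda>x. sum_list (map (\<lambda>y. dprod_tens lam (f x) (g y)) ys)) xs)"
  by (subst dt_sum_list_left) (simp only: dt_sum_list_right)

lemma deltaF_raw: "deltaF lam (a, as) = sum_list (map (\<lambda>(p, q). sum_list (map (\<lambda>(p', qs).
    tens (cl lam (p @ p')) (evalQL lam (evalQT lam q) qs)) (cutsL as))) (cutsT a))"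
  unfolding deltaF_def cutsF_def sum_list_concat_map
  by (simp add: case_prod_unfold evalQW_def comp_def)

lemma deltaF_split: "deltaF lam (a, as) = dprod_tens lam (DT lam a) (DL lam as)"
  unfolding deltaF_raw DT_def DL_def dt_sum_sum
  by (simp add: case_prod_unfold cl_append evalQL_acc[of lam "evalQT lam _"] tens_dprod)

lemma DL_Nil: "DL lam [] = oneT"
  by (simp add: DL_def)

lemma cl_PDec: "cl lam [PDec x] = basis (decF x)"
  by (simp add: cl_single hat_def)

lemma tsplit: "tens (cl lam (d @ p @ p')) (evalQL lam (basis bulletF) ((s, q) # qr)) =
  dprod_tens lam (tens (cl lam d) (csym s)) (dprod_tens lam (tens (cl lam p) (evalQT lam q))
     (tens (cl lam p') (evalQL lam (basis bulletF) qr)))"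
  by (simp only: cl_append evalQL_Cons tens_dprod)

lemma DTDL: "dprod_tens lam (DT lam t) (DL lam r) = sum_list (map (\<lambda>pq. sum_list (map (\<lambda>pq'.
   dprod_tens lam (tens (cl lam (fst pq)) (evalQT lam (snd pq)))
     (tens (cl lam (fst pq')) (evalQL lam (basis bulletF) (snd pq')))) (cutsL r))) (cutsT t))"
  unfolding DT_def DL_def dt_sum_sum by (simp add: case_prod_unfold)

lemma DL_Cons: "DL lam ((x, t) # r) = dprod_tens lam (EE lam x) (dprod_tens lam (DT lam t) (DL lam r))"
proof -
  let ?L2 = "[([PDec x], None), ([], Some x)]"
  have "DL lam ((x, t) # r) = sum_list (map (\<lambda>y. sum_list (map (\<lambda>pq. sum_list (map (\<lambda>pq'.
      tens (cl lam (fst y @ fst pq @ fst pq')) (evalQL lam (basis bulletF) ((snd y, snd pq) # snd pq')))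
      (cutsL r))) (cutsT t))) ?L2)"
    by (simp only: DL_def cutsL.simps sum_list_concat_map map_map comp_def case_prod_unfold fst_conv snd_conv)
  also have "\<dots> = sum_list (map (\<lambda>y. sum_list (map (\<lambda>pq. sum_list (map (\<lambda>pq'.
      dprod_tens lam (tens (cl lam (fst y)) (csym (snd y))) (dprod_tens lam (tens (cl lam (fst pq)) (evalQT lam (snd pq)))
     (tens (cl lam (fst pq')) (evalQL lam (basis bulletF) (snd pq')))))
      (cutsL r))) (cutsT t))) ?L2)"
    by (simp only: tsplit)
  also have "\<dots> = sum_list (map (\<lambda>y. dprod_tens lam (tens (cl lam (fst y)) (csym (snd y)))
      (dprod_tens lam (DT lam t) (DL lam r))) ?L2)"
    by (simp only: DTDL dt_sum_list_right)
  also have "\<dots> = dprod_tens lam (EE lam x) (dprod_tens lam (DT lam t) (DL lam r))"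
    by (simp add: EE_def dt_add1 cl_PDec csym_def)
  finally show ?thesis .
qed

lemma DT_Leaf: "DT lam Leaf = oneT"
  by (simp add: DT_def)

lemma DT_Bp: "DT lam (Bp a as) = tens (basis (treeF (Bp a as))) (basis bulletF) + MM (deltaF lam (a, as))"
  unfolding DT_def deltaF_raw cutsT.simps
  by (simp add: case_prod_unfold sum_list_concat_map cl_single hat_def comp_def
       linear_pm_sum_list[OF lin_MM] MM_tens)

lemma deltaF_treeF: "deltaF lam (treeF t) = DT lam t"
  by (simp add: treeF_def deltaF_split DL_Nil dt_unit_right)

lemma deltaF_bullet: "deltaF lam bulletF = oneT"
  using deltaF_treeF[of lam Leaf] by (simp add: treeF_Leaf DT_Leaf)

lemma DL_append: "DL lam (l1 @ l2) = dprod_tens lam (DL lam l1) (DL lam l2)"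
proof (induction l1)
  case Nil then show ?case by (simp add: DL_Nil dt_unit_left)
next
  case (Cons xt l1)
  obtain x t where "xt = (x, t)" by fastforce
  then show ?case using Cons by (simp add: DL_Cons dt_assoc)
qed

lemma deltaF_decF: "deltaF lam (decF x) = EE lam x"
  unfolding decF_def deltaF_split DL_Cons DL_Nil DT_Leaf dt_unit_right dt_unit_left ..

lemma Delta_Bplus:
  fixes lam :: "'k::comm_ring_1" and p :: "'x aforest \<Rightarrow>\<^sub>0 'k"
  shows "Delta_a lam (Bplus p) = tens (Bplus p) (basis bulletF) + MM (Delta_a lam p)"
proof (rule linear_pm_eqI[where La="\<lambda>p. Delta_a lam (Bplus p)"])
  show "linear_pm (\<lambda>p. Delta_a lam (Bplus p))" by (rule linear_pm_comp[OF lin_Delta lin_Bplus])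
  show "linear_pm (\<lambda>p. tens (Bplus p) (basis bulletF) + MM (Delta_a lam p))"
    by (rule linear_pm_plus[OF linear_pm_comp[OF lin_tens1 lin_Bplus] linear_pm_comp[OF lin_MM lin_Delta]])
  fix F :: "'x aforest"
  obtain a as where F: "F = (a, as)" by fastforce
  show "Delta_a lam (Bplus (basis F)) = tens (Bplus (basis F)) (basis bulletF) + MM (Delta_a lam (basis F))"
    by (simp add: F Bplus_basis Delta_basis deltaF_treeF DT_Bp)
qed

lemma basis_pair: "basis (a, b) = tens (basis a) (basis b)"
  by (simp add: tens_basis)

lemma MM_left:
  fixes lam :: "'k::comm_ring_1" and p :: "'x aforest \<Rightarrow>\<^sub>0 'k"
  shows "MM (dprod_tens lam (tens p (basis bulletF)) X) = dprod_tens lam (tens p (basis bulletF)) (MM X)"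
proof (rule linear_pm_eqI[where La="\<lambda>X. MM (dprod_tens lam (tens p (basis bulletF)) X)"])
  show "linear_pm (\<lambda>X. MM (dprod_tens lam (tens p (basis bulletF)) X))"
    by (rule linear_pm_comp[OF lin_MM lin_dt2])
  show "linear_pm (\<lambda>X. dprod_tens lam (tens p (basis bulletF)) (MM X))"
    by (rule linear_pm_comp[OF lin_dt2 lin_MM])
  fix ab :: "'x aforest \<times> 'x aforest"
  obtain a b where ab: "ab = (a, b)" by (cases ab)
  show "MM (dprod_tens lam (tens p (basis bulletF)) (basis ab)) = dprod_tens lam (tens p (basis bulletF)) (MM (basis ab))"
    by (simp add: ab basis_pair dt_tens MM_tens dprod_unit_left)
qed

lemma MM_right:
  fixes lam :: "'k::comm_ring_1" and p :: "'x aforest \<Rightarrow>\<^sub>0 'k"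
  shows "MM (dprod_tens lam X (tens p (basis bulletF))) = dprod_tens lam (MM X) (tens p (basis bulletF))"
proof (rule linear_pm_eqI[where La="\<lambda>X. MM (dprod_tens lam X (tens p (basis bulletF)))"])
  show "linear_pm (\<lambda>X. MM (dprod_tens lam X (tens p (basis bulletF))))"
    by (rule linear_pm_comp[OF lin_MM lin_dt1])
  show "linear_pm (\<lambda>X. dprod_tens lam (MM X) (tens p (basis bulletF)))"
    by (rule linear_pm_comp[OF lin_dt1 lin_MM])
  fix ab :: "'x aforest \<times> 'x aforest"
  obtain a b where ab: "ab = (a, b)" by (cases ab)
  show "MM (dprod_tens lam (basis ab) (tens p (basis bulletF))) = dprod_tens lam (MM (basis ab)) (tens p (basis bulletF))"
    by (simp add: ab basis_pair dt_tens MM_tens dprod_unit_right)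
qed

lemma MM_RB:
  fixes lam :: "'k::comm_ring_1" and X :: "'x aforest \<times> 'x aforest \<Rightarrow>\<^sub>0 'k"
  shows "dprod_tens lam (MM X) (MM Y) =
   MM (dprod_tens lam (MM X) Y + dprod_tens lam X (MM Y) + smul lam (dprod_tens lam X Y))"
proof -
  have b1: "bilinear_pm (\<lambda>X Y. dprod_tens lam (MM X) (MM Y))"
    by (rule bilinear_compose[OF bilinear_dprod_tens lin_MM lin_MM])
  have b2: "bilinear_pm (\<lambda>X Y. MM (dprod_tens lam (MM X) Y + dprod_tens lam X (MM Y) + smul lam (dprod_tens lam X Y)))"
    apply (rule bilinear_post[OF _ lin_MM])
    apply (rule bilinear_plus)+
      apply (rule bilinear_compose[OF bilinear_dprod_tens lin_MM linear_pm_id, simplified])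
     apply (rule bilinear_compose[OF bilinear_dprod_tens linear_pm_id lin_MM, simplified])
    apply (rule bilinear_csmul[OF bilinear_dprod_tens])
    done
  show ?thesis
  proof (rule bilinear_pm_eqI[OF b1 b2])
    fix ab cd :: "'x aforest \<times> 'x aforest"
    obtain a b where ab: "ab = (a, b)" by (cases ab)
    obtain c d where cd: "cd = (c, d)" by (cases cd)
    show "dprod_tens lam (MM (basis ab)) (MM (basis cd)) =
      MM (dprod_tens lam (MM (basis ab)) (basis cd) + dprod_tens lam (basis ab) (MM (basis cd)) +
          smul lam (dprod_tens lam (basis ab) (basis cd)))"
      by (simp add: ab cd basis_pair dt_tens MM_tens MM_add MM_smul RB tens_add2 tens_smul2 Bplus_add Bplus_smul)
  qed
qed

abbreviation multB :: "'k::comm_ring_1 \<Rightarrow> 'x aforest \<Rightarrow> 'x aforest \<Rightarrow> bool" where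
  "multB lam F1 F2 \<equiv> Delta_a lam (dprod lam (basis F1) (basis F2)) =
     dprod_tens lam (deltaF lam F1) (deltaF lam F2)"

lemma mult_tree_step:
  fixes lam :: "'k::comm_ring_1"
  assumes IH: "\<And>F1 F2 :: 'x aforest. sz F1 + sz F2 < N \<Longrightarrow> multB lam F1 F2"
    and N: "sz (treeF s) + sz (treeF t) \<le> N"
  shows "multB lam (treeF s) (treeF (t :: 'x atree))"
proof (cases "s = Leaf \<or> t = Leaf")
  case True
  then show ?thesis
    by (auto simp: treeF_Leaf dprod_unit_left dprod_unit_right deltaF_bullet dt_unit_left dt_unit_right Delta_basis)
next
  case False
  then obtain a as b bs where s: "s = Bp a as" and t: "t = Bp b bs"
    by (metis atree.exhaust)
  define S where "S = (basis (a, as) :: 'x aforest \<Rightarrow>\<^sub>0 'k)"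
  define T where "T = (basis (b, bs) :: 'x aforest \<Rightarrow>\<^sub>0 'k)"
  have ss: "basis (treeF s) = Bplus S" by (simp add: s S_def treeF_Bp)
  have tt: "basis (treeF t) = Bplus T" by (simp add: t T_def treeF_Bp)
  have szs: "sz (a, as) < sz (treeF s)" "sz (b, bs) < sz (treeF t)"
    by (simp_all add: s t sz_Bp)
  let ?p = "dprod lam" and ?m = "dprod_tens lam" and ?D = "Delta_a lam"
  have i1: "?D (?p (Bplus S) T) = ?m (?D (Bplus S)) (?D T)"
    using IH[of "treeF s" "(b, bs)"] szs N by (simp add: ss T_def Delta_basis[symmetric])
  have i2: "?D (?p S (Bplus T)) = ?m (?D S) (?D (Bplus T))"
    using IH[of "(a, as)" "treeF t"] szs N by (simp add: tt S_def Delta_basis[symmetric])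
  have i3: "?D (?p S T) = ?m (?D S) (?D T)"
    using IH[of "(a, as)" "(b, bs)"] szs N by (simp add: S_def T_def Delta_basis[symmetric])
  define A where "A = ?D S"
  define B where "B = ?D T"
  define a1 where "a1 = tens (Bplus S) (basis bulletF :: 'x aforest \<Rightarrow>\<^sub>0 'k)"
  define b1 where "b1 = tens (Bplus T) (basis bulletF :: 'x aforest \<Rightarrow>\<^sub>0 'k)"
  have DS: "?D (Bplus S) = a1 + MM A" unfolding a1_def A_def by (rule Delta_Bplus)
  have DT: "?D (Bplus T) = b1 + MM B" unfolding b1_def B_def by (rule Delta_Bplus)
  have "?D (?p (Bplus S) (Bplus T)) =
      ?D (Bplus (?p (Bplus S) T + ?p S (Bplus T) + smul lam (?p S T)))"
    by (simp add: RB)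
  also have "\<dots> = tens (?p (Bplus S) (Bplus T)) (basis bulletF)
      + MM (?m (?D (Bplus S)) (?D T) + ?m (?D S) (?D (Bplus T)) + smul lam (?m (?D S) (?D T)))"
    by (subst Delta_Bplus) (simp add: RB[symmetric] Delta_add Delta_smul i1 i2 i3)
  also have "\<dots> = tens (?p (Bplus S) (Bplus T)) (basis bulletF)
      + (?m a1 (MM B) + ?m (MM A) b1 + (MM (?m (MM A) B) + MM (?m A (MM B)) + smul lam (MM (?m A B))))"
    unfolding DS DT A_def[symmetric] B_def[symmetric]
    by (simp add: dt_add1 dt_add2 MM_add MM_smul a1_def b1_def MM_left MM_right add_ac)
  also have "\<dots> = tens (?p (Bplus S) (Bplus T)) (basis bulletF)
      + (?m a1 (MM B) + ?m (MM A) b1 + ?m (MM A) (MM B))"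
    by (simp add: MM_RB MM_add MM_smul)
  also have "\<dots> = ?m (?D (Bplus S)) (?D (Bplus T))"
    unfolding DS DT by (simp add: dt_add1 dt_add2 a1_def b1_def dt_tens dprod_unit_left add_ac)
  finally show ?thesis
    by (simp add: ss tt Delta_basis[symmetric])
qed

definition PF :: "'k::comm_ring_1 \<Rightarrow> 'x aforest \<Rightarrow> ('x aforest \<times> 'x aforest \<Rightarrow>\<^sub>0 'k)" where
  "PF lam F = (if snd F = [] then oneT else
     dprod_tens lam (DT lam (fst F)) (dprod_tens lam (DL lam (butlast (snd F))) (EE lam (fst (last (snd F))))))"

lemma snd_bullet: "snd bulletF = []" by (simp add: bulletF_def)

lemma glue_delta: "deltaF lam (glue F t G) = dprod_tens lam (dprod_tens lam (PF lam F) (DT lam t)) (DL lam (snd G))"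
proof -
  obtain a as where F: "F = (a, as)" by fastforce
  show ?thesis
  proof (cases "as = []")
    case True
    then show ?thesis
      by (simp add: F PF_def glue_def replaceLast_def deltaF_split dt_unit_left)
  next
    case False
    then have as: "as = butlast as @ [last as]" by simp
    have g: "glue F t G = (a, butlast as @ (fst (last as), t) # snd G)"
      using False by (simp add: F glue_def replaceLast_def)
    show ?thesis
      unfolding g deltaF_split using False
      by (simp add: F PF_def DL_append DL_Cons dt_assoc)
  qed
qed

lemma deltaF_PF: "deltaF lam F = dprod_tens lam (PF lam F) (DT lam (lastT F))"
  using glue_delta[of lam F "lastT F" bulletF]
  by (simp add: glue_bullet_right DL_Nil dt_unit_right snd_bullet)

lemma mult_forest_step:
  fixes lam :: "'k::comm_ring_1"
  assumes IH: "\<And>F1 F2 :: 'x aforest. sz F1 + sz F2 < N \<Longrightarrow> multB lam F1 F2"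
    and N: "sz F1 + sz F2 \<le> N"
  shows "multB lam F1 (F2 :: 'x aforest)"
proof -
  let ?m = "dprod_tens lam"
  define P where "P = PF lam F1"
  define l where "l = lastT F1"
  obtain b bs where F2: "F2 = (b, bs)" by fastforce
  have s1: "sz (treeF l) \<le> sz F1" unfolding l_def by (rule sz_lastT)
  have s2: "sz (treeF b) \<le> sz F2" using sz_fst[of F2] by (simp add: F2)
  have "sz (treeF l) + sz (treeF b) \<le> N" using s1 s2 N by linarith
  then have tree: "multB lam (treeF l) (treeF b)"
    using mult_tree_step[OF IH] by blast
  have lin: "linear_pm (\<lambda>Y. ?m (?m P Y) (DL lam bs))"
    by (rule linear_pm_comp[OF lin_dt1 lin_dt2])
  have DTsum: "lin_ext (DT lam) (TP lam l b) = ?m (DT lam l) (DT lam b)"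
  proof -
    have "lin_ext (DT lam) (TP lam l b) = lin_ext (\<lambda>t. Delta_a lam (basis (treeF t))) (TP lam l b)"
      by (simp add: Delta_basis deltaF_treeF)
    also have "\<dots> = Delta_a lam (iota (TP lam l b))"
      unfolding iota_def by (rule lin_ext_comp[OF lin_Delta, symmetric])
    also have "\<dots> = ?m (DT lam l) (DT lam b)"
      using tree by (simp add: TT_iota deltaF_treeF)
    finally show ?thesis .
  qed
  have "Delta_a lam (dprod lam (basis F1) (basis F2)) =
      lin_ext (\<lambda>t. Delta_a lam (basis (glue F1 t F2))) (TP lam l b)"
    by (simp add: dprod_GL F2 l_def GL_def lin_ext_comp[OF lin_Delta])
  also have "\<dots> = lin_ext (\<lambda>t. ?m (?m P (DT lam t)) (DL lam bs)) (TP lam l b)"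
    by (simp add: Delta_basis glue_delta P_def F2)
  also have "\<dots> = ?m (?m P (lin_ext (DT lam) (TP lam l b))) (DL lam bs)"
    by (rule lin_ext_comp[OF lin, symmetric])
  also have "\<dots> = ?m (deltaF lam F1) (deltaF lam F2)"
    using DTsum by (simp add: deltaF_PF[of lam F1] P_def l_def[symmetric] F2 deltaF_split dt_assoc)
  finally show ?thesis .
qed

lemma mult_basis:
  fixes lam :: "'k::comm_ring_1" and F1 F2 :: "'x aforest"
  shows "multB lam F1 F2"
proof (induction "sz F1 + sz F2" arbitrary: F1 F2 rule: less_induct)
  case less
  show ?case
  proof (rule mult_forest_step[where N="sz F1 + sz F2"])
    fix G1 G2 :: "'x aforest"
    assume "sz G1 + sz G2 < sz F1 + sz F2"
    then show "multB lam G1 G2" by (rule less)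
  qed simp
qed

theorem mainTheorem1:
  fixes lam :: "'k::comm_ring_1"
  shows "Delta_a lam (basis bulletF) = tens (basis bulletF) (basis bulletF :: 'x aforest \<Rightarrow>\<^sub>0 'k)
    \<and> (\<forall>x::'x. Delta_a lam (basis (decF x)) =
           tens (basis (decF x)) (basis bulletF) + tens (basis bulletF) (basis (decF x)))
    \<and> (\<forall>F::'x aforest. Delta_a lam (Bplus (basis F)) =
           tens (Bplus (basis F)) (basis bulletF) + map_tens id Bplus (Delta_a lam (basis F)))
    \<and> (\<forall>F1 F2 :: 'x aforest. Delta_a lam (dprod lam (basis F1) (basis F2)) =
           dprod_tens lam (Delta_a lam (basis F1)) (Delta_a lam (basis F2)))"
  by (simp add: Delta_basis deltaF_bullet deltaF_decF EE_def Delta_Bplus mult_basis)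

end
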